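(* Let $R$ be a commutative ring which is free as an abelian group with $\mathbb{Z}$-basis $V$, let $n\ge2$, $p$ a prime and $r\ge1$. Then $$\Gamma(SL_n(R),p^r)/\Gamma(SL_n(R),p^{r+1})\cong\bigoplus_{n^2-1}\mathbb{F}_p[V].$$
   Context: $\Gamma(SL_n(R),p^m)=\ker\big(SL_n(R)\to SL_n(R\otimes_{\mathbb{Z}}\mathbb{Z}/p^m)\big)$. $\mathbb{F}_p[V]$ denotes the $\mathbb{F}_p$-vector space with basis $V$ (equivalently the additive group of $R/pR$); the right-hand side is a direct sum of $n^2-1$ copies. *)

theory Defs
  imports "HOL-Algebra.Product_Groups" "Jordan_Normal_Form.Determinant"
begin

definition is_Z_basis :: "'a::comm_ring_1 set \<Rightarrow> bool" where
  "is_Z_basis V \<longleftrightarrow> (\<forall>x::'a. \<exists>!c::'a \<Rightarrow> int.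
      (\<forall>v. v \<notin> V \<longrightarrow> c v = 0) \<and> finite {v. c v \<noteq> 0} \<and>
      x = (\<Sum>v\<in>{v. c v \<noteq> 0}. of_int (c v) * v))"

definition cong_one_mod :: "nat \<Rightarrow> nat \<Rightarrow> 'a::comm_ring_1 mat \<Rightarrow> bool" where
  "cong_one_mod n q A \<longleftrightarrow> (\<forall>i<n. \<forall>j<n. \<exists>y::'a. A $$ (i,j) - (1\<^sub>m n) $$ (i,j) = of_nat q * y)"

definition Gamma_SL :: "nat \<Rightarrow> nat \<Rightarrow> ('a::comm_ring_1 mat) monoid" where
  "Gamma_SL n q = \<lparr>carrier = {A \<in> carrier_mat n n. det A = 1 \<and> cong_one_mod n q A},
                   monoid.mult = (\<lambda>A B. A * B), monoid.one = 1\<^sub>m n\<rparr>"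

definition Fp_free :: "nat \<Rightarrow> 'b set \<Rightarrow> ('b \<Rightarrow> int) monoid" where
  "Fp_free p V = sum_group V (\<lambda>_. integer_mod_group p)"

end

theory Submission
  imports Defs
begin

definition goodc :: "'a set \<Rightarrow> ('a \<Rightarrow> int) \<Rightarrow> bool" where
  "goodc V c \<longleftrightarrow> (\<forall>v. v \<notin> V \<longrightarrow> c v = 0) \<and> finite {v. c v \<noteq> 0}"

definition repc :: "('a::comm_ring_1 \<Rightarrow> int) \<Rightarrow> 'a" where
  "repc c = (\<Sum>v\<in>{v. c v \<noteq> 0}. of_int (c v) * v)"

lemma repc_superset:
  assumes "finite S" "{v. c v \<noteq> 0} \<subseteq> S"
  shows "repc c = (\<Sum>v\<in>S. of_int (c v) * v)"
  unfolding repc_def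
  by (rule sum.mono_neutral_left) (use assms in auto)

lemma goodc_add: "goodc V c \<Longrightarrow> goodc V d \<Longrightarrow> goodc V (\<lambda>v. c v + d v)"
  unfolding goodc_def
  by (auto intro: finite_subset[of _ "{v. c v \<noteq> 0} \<union> {v. d v \<noteq> 0}"])

lemma goodc_smult: "goodc V c \<Longrightarrow> goodc V (\<lambda>v. k * c v)"
  unfolding goodc_def
  by (auto intro: finite_subset[of _ "{v. c v \<noteq> 0}"])

lemma goodc_zero: "goodc V (\<lambda>v. 0)" unfolding goodc_def by auto

lemma repc_add:
  assumes "goodc V c" "goodc V d"
  shows "repc (\<lambda>v. c v + d v) = repc c + repc d"
proof -
  let ?S = "{v. c v \<noteq> 0} \<union> {v. d v \<noteq> 0}"
  have f: "finite ?S" using assms unfolding goodc_def by auto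
  have "repc (\<lambda>v. c v + d v) = (\<Sum>v\<in>?S. of_int (c v + d v) * v)"
    by (rule repc_superset[OF f]) auto
  also have "\<dots> = (\<Sum>v\<in>?S. of_int (c v) * v) + (\<Sum>v\<in>?S. of_int (d v) * v)"
    by (simp add: distrib_right sum.distrib)
  also have "\<dots> = repc c + repc d"
    using repc_superset[OF f, of c] repc_superset[OF f, of d] by auto
  finally show ?thesis .
qed

lemma repc_smult:
  assumes "goodc V c"
  shows "repc (\<lambda>v. k * c v) = of_int k * repc c"
proof -
  let ?S = "{v. c v \<noteq> 0}"
  have f: "finite ?S" using assms unfolding goodc_def by auto
  have "repc (\<lambda>v. k * c v) = (\<Sum>v\<in>?S. of_int (k * c v) * v)"
    by (rule repc_superset[OF f]) auto
  also have "\<dots> = of_int k * repc c"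
    unfolding repc_def by (simp add: sum_distrib_left mult.assoc)
  finally show ?thesis .
qed

lemma repc_zero: "repc (\<lambda>v. 0) = 0" unfolding repc_def by simp

locale zbasis =
  fixes V :: "'a::comm_ring_1 set"
  assumes basis: "is_Z_basis V"
begin

definition coef :: "'a \<Rightarrow> 'a \<Rightarrow> int" where
  "coef x = (THE c. goodc V c \<and> x = repc c)"

lemma ex1: "\<exists>!c. goodc V c \<and> x = repc c"
  using basis unfolding is_Z_basis_def goodc_def repc_def by blast

lemma coef: "goodc V (coef x)" "repc (coef x) = x"
  using theI'[OF ex1[of x]] unfolding coef_def by auto

lemma coef_eqI: "goodc V c \<Longrightarrow> repc c = x \<Longrightarrow> coef x = c"
  using ex1[of x] coef[of x] by metis

lemma coef_add: "coef (x + y) = (\<lambda>v. coef x v + coef y v)"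
  by (rule coef_eqI) (auto simp: goodc_add coef repc_add[of V])

lemma coef_smult: "coef (of_int k * x) = (\<lambda>v. k * coef x v)"
  by (rule coef_eqI) (auto simp: goodc_smult coef repc_smult[of V])

lemma coef_zero: "coef 0 = (\<lambda>v. 0)"
  by (rule coef_eqI) (auto simp: goodc_zero repc_zero)

lemma coef_neg: "coef (- x) = (\<lambda>v. - coef x v)"
  using coef_smult[of "-1" x] by simp

lemma coef_diff: "coef (x - y) = (\<lambda>v. coef x v - coef y v)"
  using coef_add[of x "-y"] coef_neg[of y] by simp

lemma coef_nat_mult: "coef (of_nat m * x) = (\<lambda>v. int m * coef x v)"
  using coef_smult[of "int m" x] by simp

lemma coef_outside: "v \<notin> V \<Longrightarrow> coef x v = 0"
  using coef(1)[of x] unfolding goodc_def by auto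

lemma coef_finite: "finite {v. coef x v \<noteq> 0}"
  using coef(1)[of x] unfolding goodc_def by auto

lemma torsion_free:
  assumes "m > 0" "of_nat m * y = (0::'a)" shows "y = 0"
proof -
  have "coef (of_nat m * y) = (\<lambda>v. 0)" using assms coef_zero by simp
  hence "\<And>v. int m * coef y v = 0" using coef_nat_mult[of m y] by metis
  hence "coef y = (\<lambda>v. 0)" using assms by auto
  thus ?thesis using coef(2)[of y] repc_zero by metis
qed

lemma dvd_iff:
  assumes "m > 0"
  shows "(\<exists>y. x = of_nat m * y) \<longleftrightarrow> (\<forall>v. int m dvd coef x v)"
proof
  assume "\<exists>y. x = of_nat m * y"
  then obtain y where "x = of_nat m * y" by blast
  thus "\<forall>v. int m dvd coef x v" using coef_nat_mult[of m y] by auto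
next
  assume d: "\<forall>v. int m dvd coef x v"
  define c where "c = (\<lambda>v. coef x v div int m)"
  have g: "goodc V c"
    using coef(1)[of x] unfolding goodc_def c_def
    by (auto intro: finite_subset[of _ "{v. coef x v \<noteq> 0}"])
  have "(\<lambda>v. int m * c v) = coef x" using d unfolding c_def by auto
  hence "of_int (int m) * repc c = x" using repc_smult[OF g, of "int m"] coef(2)[of x] by metis
  thus "\<exists>y. x = of_nat m * y" by (metis of_int_of_nat_eq)
qed

end

definition em :: "nat \<Rightarrow> 'a::comm_ring_1 mat \<Rightarrow> nat \<Rightarrow> nat \<Rightarrow> 'a" where
  "em n A i j = A $$ (i,j) - (if i = j then 1 else 0)"

definition dv :: "nat \<Rightarrow> 'a::comm_ring_1 \<Rightarrow> bool" where
  "dv q x \<longleftrightarrow> (\<exists>y. x = of_nat q * y)"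

lemma cong_one_mod_em: "cong_one_mod n q A \<longleftrightarrow> (\<forall>i<n. \<forall>j<n. dv q (em n A i j))"
  unfolding cong_one_mod_def em_def dv_def by auto

lemma dv_add: "dv q x \<Longrightarrow> dv q y \<Longrightarrow> dv q (x + y)"
  unfolding dv_def by (metis distrib_left)
lemma dv_neg: "dv q x \<Longrightarrow> dv q (- x)"
  unfolding dv_def by (metis mult_minus_right)
lemma dv_diff: "dv q x \<Longrightarrow> dv q y \<Longrightarrow> dv q (x - y)"
  using dv_add dv_neg by (metis diff_conv_add_uminus)
lemma dv_multl: "dv q x \<Longrightarrow> dv q (y * x)"
  unfolding dv_def by (metis mult.left_commute)
lemma dv_multr: "dv q x \<Longrightarrow> dv q (x * y)"
  unfolding dv_def by (metis mult.assoc)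
lemma dv_zero: "dv q 0" unfolding dv_def by (metis mult_zero_right)
lemma dv_sum: "(\<And>i. i \<in> S \<Longrightarrow> dv q (f i)) \<Longrightarrow> dv q (sum f S)"
  by (induction S rule: infinite_finite_induct) (auto simp: dv_zero dv_add)
lemma dv_mult2: "dv q x \<Longrightarrow> dv q' y \<Longrightarrow> dv (q*q') (x * y)"
  unfolding dv_def by (metis mult.assoc mult.left_commute of_nat_mult)
lemma dv_trans: "dv (q*q') x \<Longrightarrow> dv q x"
  unfolding dv_def by (metis mult.assoc of_nat_mult)
lemma dv_of_nat: "dv q (of_nat q * x)" unfolding dv_def by auto

lemma mult_entry:
  assumes A: "A \<in> carrier_mat n n" and B: "B \<in> carrier_mat n n" and i: "i < n" and j: "j < n"
  shows "(A * B) $$ (i,j) = B $$ (i,j) + (\<Sum>l<n. em n A i l * B $$ (l,j))"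
proof -
  have "(A * B) $$ (i,j) = (\<Sum>l<n. A $$ (i,l) * B $$ (l,j))"
    using A B i j by (simp add: scalar_prod_def lessThan_atLeast0)
  also have "\<dots> = (\<Sum>l<n. (if i = l then 1 else 0) * B $$ (l,j) + em n A i l * B $$ (l,j))"
    by (rule sum.cong) (auto simp: em_def algebra_simps)
  also have "\<dots> = (\<Sum>l<n. (if i = l then B $$ (l,j) else 0)) + (\<Sum>l<n. em n A i l * B $$ (l,j))"
    by (subst sum.distrib, rule arg_cong2[where f="(+)"], rule sum.cong, auto)
  also have "\<dots> = B $$ (i,j) + (\<Sum>l<n. em n A i l * B $$ (l,j))"
    using i by simp
  finally show ?thesis .
qed

lemma em_mult:
  assumes A: "A \<in> carrier_mat n n" and B: "B \<in> carrier_mat n n" and i: "i < n" and j: "j < n"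
  shows "em n (A * B) i j = em n A i j + em n B i j + (\<Sum>l<n. em n A i l * em n B l j)"
proof -
  have "(\<Sum>l<n. em n A i l * B $$ (l,j)) =
        (\<Sum>l<n. em n A i l * (if l = j then 1 else 0) + em n A i l * em n B l j)"
    by (rule sum.cong) (auto simp: em_def algebra_simps)
  also have "\<dots> = (\<Sum>l<n. (if l = j then em n A i l else 0)) + (\<Sum>l<n. em n A i l * em n B l j)"
    by (subst sum.distrib, rule arg_cong2[where f="(+)"], rule sum.cong, auto)
  also have "\<dots> = em n A i j + (\<Sum>l<n. em n A i l * em n B l j)"
    using j by simp
  finally show ?thesis using mult_entry[OF A B i j] by (simp add: em_def algebra_simps)
qed

lemma carrier_Gamma: "carrier (Gamma_SL n q) = {A \<in> carrier_mat n n. det A = 1 \<and> (\<forall>i<n. \<forall>j<n. dv q (em n A i j))}"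
  by (simp add: Gamma_SL_def cong_one_mod_em)

lemma mult_Gamma[simp]: "A \<otimes>\<^bsub>Gamma_SL n q\<^esub> B = A * B"
  by (simp add: Gamma_SL_def)
lemma one_Gamma[simp]: "\<one>\<^bsub>Gamma_SL n q\<^esub> = 1\<^sub>m n"
  by (simp add: Gamma_SL_def)

lemma em_one: "i < n \<Longrightarrow> j < n \<Longrightarrow> em n (1\<^sub>m n) i j = 0"
  by (simp add: em_def)

lemma smult_one_one: "1 \<cdot>\<^sub>m (1\<^sub>m n :: 'a::comm_ring_1 mat) = 1\<^sub>m n" by (rule eq_matI) auto

lemma group_Gamma: "group (Gamma_SL n q :: 'a::comm_ring_1 mat monoid)"
proof (rule groupI)
  fix A B :: "'a mat"
  assume A: "A \<in> carrier (Gamma_SL n q)" and B: "B \<in> carrier (Gamma_SL n q)"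
  have Am: "A \<in> carrier_mat n n" and Bm: "B \<in> carrier_mat n n" using A B by (auto simp: carrier_Gamma)
  have "det (A * B) = 1" using A B det_mult[OF Am Bm] by (auto simp: carrier_Gamma)
  moreover have "dv q (em n (A*B) i j)" if "i < n" "j < n" for i j
    unfolding em_mult[OF Am Bm that] using A B that
    by (auto simp: carrier_Gamma intro!: dv_add dv_sum dv_multr)
  ultimately show "A \<otimes>\<^bsub>Gamma_SL n q\<^esub> B \<in> carrier (Gamma_SL n q)"
    using Am Bm by (auto simp: carrier_Gamma)
next
  show "\<one>\<^bsub>Gamma_SL n q\<^esub> \<in> carrier (Gamma_SL n q)"
    by (auto simp: carrier_Gamma em_one dv_zero)
next
  fix A B C :: "'a mat"
  assume "A \<in> carrier (Gamma_SL n q)" "B \<in> carrier (Gamma_SL n q)" "C \<in> carrier (Gamma_SL n q)"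
  thus "A \<otimes>\<^bsub>Gamma_SL n q\<^esub> B \<otimes>\<^bsub>Gamma_SL n q\<^esub> C = A \<otimes>\<^bsub>Gamma_SL n q\<^esub> (B \<otimes>\<^bsub>Gamma_SL n q\<^esub> C)"
    by (auto simp: carrier_Gamma assoc_mult_mat)
next
  fix A :: "'a mat"
  assume "A \<in> carrier (Gamma_SL n q)"
  thus "\<one>\<^bsub>Gamma_SL n q\<^esub> \<otimes>\<^bsub>Gamma_SL n q\<^esub> A = A"
    by (auto simp: carrier_Gamma)
next
  fix A :: "'a mat"
  assume A: "A \<in> carrier (Gamma_SL n q)"
  have Am: "A \<in> carrier_mat n n" and d: "det A = 1" using A by (auto simp: carrier_Gamma)
  define Y where "Y = adj_mat A"
  have Ym: "Y \<in> carrier_mat n n" using adj_mat(1)[OF Am] Y_def by simp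
  have AY: "A * Y = 1\<^sub>m n" using adj_mat(2)[OF Am] d Y_def smult_one_one by simp
  have YA: "Y * A = 1\<^sub>m n" using adj_mat(3)[OF Am] d Y_def smult_one_one by simp
  have "det A * det Y = 1" using det_mult[OF Am Ym] AY by simp
  hence dY: "det Y = 1" using d by simp
  have "dv q (em n Y i j)" if ij: "i < n" "j < n" for i j
  proof -
    have "(A * Y) $$ (i,j) = Y $$ (i,j) + (\<Sum>l<n. em n A i l * Y $$ (l,j))"
      by (rule mult_entry[OF Am Ym ij])
    hence "em n Y i j = - (\<Sum>l<n. em n A i l * Y $$ (l,j))"
      using AY ij by (simp add: em_def)
    thus ?thesis using A ij by (auto simp: carrier_Gamma intro!: dv_neg dv_sum dv_multr)
  qed
  hence "Y \<in> carrier (Gamma_SL n q)" using Ym dY by (auto simp: carrier_Gamma)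
  thus "\<exists>y\<in>carrier (Gamma_SL n q). y \<otimes>\<^bsub>Gamma_SL n q\<^esub> A = \<one>\<^bsub>Gamma_SL n q\<^esub>"
    using YA by auto
qed

lemma prod_expand:
  fixes x :: "nat \<Rightarrow> 'a::comm_ring_1"
  assumes "finite S"
  shows "\<exists>z. (\<Prod>i\<in>S. 1 + of_nat q * x i) = 1 + of_nat q * (\<Sum>i\<in>S. x i) + of_nat q * of_nat q * z"
  using assms
proof (induction S rule: finite_induct)
  case empty then show ?case by (auto intro: exI[of _ 0])
next
  case (insert a S)
  then obtain z where z: "(\<Prod>i\<in>S. 1 + of_nat q * x i) = 1 + of_nat q * (\<Sum>i\<in>S. x i) + of_nat q * of_nat q * z" by blast
  have "(\<Prod>i\<in>insert a S. 1 + of_nat q * x i) = (1 + of_nat q * x a) * (\<Prod>i\<in>S. 1 + of_nat q * x i)"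
    using insert by simp
  also have "\<dots> = 1 + of_nat q * (x a + (\<Sum>i\<in>S. x i)) + of_nat q * of_nat q * (z + x a * (\<Sum>i\<in>S. x i) + of_nat q * x a * z)"
    unfolding z by (simp add: algebra_simps)
  finally show ?case using insert by auto
qed

lemma det_expand:
  fixes A :: "'a::comm_ring_1 mat"
  assumes Am: "A \<in> carrier_mat n n" and X: "\<And>i j. i < n \<Longrightarrow> j < n \<Longrightarrow> em n A i j = of_nat q * X i j"
  shows "\<exists>z. det A = 1 + of_nat q * (\<Sum>i<n. X i i) + of_nat q * of_nat q * z"
proof -
  let ?U = "{0..<n}"
  let ?P = "{p. p permutes ?U}"
  let ?t = "\<lambda>p. signof p * (\<Prod>i = 0..<n. A $$ (i, p i))"
  have fP: "finite ?P" by (simp add: finite_permutations)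
  have idP: "id \<in> ?P" by (simp add: permutes_id)
  have dA: "det A = ?t id + (\<Sum>p\<in>?P - {id}. ?t p)"
    unfolding det_def'[OF Am] using sum.remove[OF fP idP, of ?t] by simp
  have "?t id = (\<Prod>i\<in>?U. 1 + of_nat q * X i i)"
    by (simp add: sign_id) (rule prod.cong, auto simp: X[symmetric] em_def)
  then obtain z1 where z1: "?t id = 1 + of_nat q * (\<Sum>i<n. X i i) + of_nat q * of_nat q * z1"
    using prod_expand[of ?U q "\<lambda>i. X i i"] by (auto simp: lessThan_atLeast0)
  have "dv (q*q) (?t p)" if p: "p \<in> ?P - {id}" for p
  proof -
    have pp: "p permutes ?U" and pn: "p \<noteq> id" using p by auto
    obtain i where pi: "p i \<noteq> i" using pn by (metis eq_id_iff)
    have iU: "i \<in> ?U" using pi pp by (meson permutes_not_in)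
    define j where "j = p i"
    have jU: "j \<in> ?U" using iU pp j_def by (simp add: permutes_in_image)
    have ji: "j \<noteq> i" using pi j_def by simp
    have pj: "p j \<noteq> j" using pi pp j_def by (metis permutes_inj injD)
    have ent: "dv q (A $$ (k, p k))" if "k \<in> ?U" "p k \<noteq> k" for k
    proof -
      have "p k \<in> ?U" using that pp by (simp add: permutes_in_image)
      hence "A $$ (k, p k) = em n A k (p k)" using that by (simp add: em_def)
      thus ?thesis using X[of k "p k"] that \<open>p k \<in> ?U\<close> by (simp add: dv_of_nat)
    qed
    have "(\<Prod>k\<in>?U. A $$ (k, p k)) = A $$ (i, p i) * (\<Prod>k\<in>?U - {i}. A $$ (k, p k))"
      using prod.remove[of ?U i] iU by simp
    also have "(\<Prod>k\<in>?U - {i}. A $$ (k, p k)) = A $$ (j, p j) * (\<Prod>k\<in>?U - {i} - {j}. A $$ (k, p k))"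
      using prod.remove[of "?U - {i}" j] jU ji by simp
    finally have "(\<Prod>k\<in>?U. A $$ (k, p k)) = (A $$ (i, p i) * A $$ (j, p j)) * (\<Prod>k\<in>?U - {i} - {j}. A $$ (k, p k))"
      by (simp add: mult.assoc)
    moreover have "dv (q*q) (A $$ (i, p i) * A $$ (j, p j))"
      using ent[OF iU pi] ent[OF jU pj] by (rule dv_mult2)
    ultimately show ?thesis by (metis dv_multr dv_multl)
  qed
  hence "dv (q*q) (\<Sum>p\<in>?P - {id}. ?t p)" by (rule dv_sum)
  then obtain w where "(\<Sum>p\<in>?P - {id}. ?t p) = of_nat (q*q) * w" unfolding dv_def by blast
  hence "det A = 1 + of_nat q * (\<Sum>i<n. X i i) + of_nat q * of_nat q * (z1 + w)"
    using dA z1 by (simp add: algebra_simps)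
  thus ?thesis by blast
qed

definition Em :: "nat \<Rightarrow> nat \<Rightarrow> nat \<Rightarrow> 'a::comm_ring_1 \<Rightarrow> 'a mat" where
  "Em n a b c = mat n n (\<lambda>(k,l). if k = l then 1 else if k = a \<and> l = b then c else 0)"
lemma Em_carrier[simp]: "Em n a b c \<in> carrier_mat n n" by (simp add: Em_def)
lemma t1: "a < b \<Longrightarrow> upper_triangular (Em n a b c)"  by (auto simp: upper_triangular_def Em_def)
lemma t2: "prod_list (diag_mat (Em n a b c)) = 1" 
  unfolding prod_list_diag_prod by (rule prod.neutral) (auto simp: Em_def)
lemma t3: "b < a \<Longrightarrow> i < j \<Longrightarrow> j < n \<Longrightarrow> Em n a b c $$ (i,j) = 0" by (auto simp: Em_def)
lemma em_Em: "a \<noteq> b \<Longrightarrow> k < n \<Longrightarrow> l < n \<Longrightarrow> em n (Em n a b c) k l = (if k = a \<and> l = b then c else 0)"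
  by (auto simp: Em_def em_def)

lemma det_Em: assumes "a \<noteq> b" shows "det (Em n a b c) = 1"
proof (cases "a < b")
  case True
  show ?thesis by (subst det_upper_triangular[OF t1[OF True] Em_carrier]) (rule t2)
next
  case False
  hence "b < a" using assms by simp
  show ?thesis by (subst det_lower_triangular[OF t3[OF \<open>b < a\<close>] Em_carrier]) (auto simp: t2)
qed
lemma mult_entry_right:
  assumes A: "A \<in> carrier_mat n n" and B: "B \<in> carrier_mat n n" and i: "i < n" and j: "j < n"
  shows "(A * B) $$ (i,j) = A $$ (i,j) + (\<Sum>l<n. A $$ (i,l) * em n B l j)"
proof -
  have "(A * B) $$ (i,j) = (\<Sum>l<n. A $$ (i,l) * B $$ (l,j))"
    using A B i j by (simp add: scalar_prod_def lessThan_atLeast0)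
  also have "\<dots> = (\<Sum>l<n. A $$ (i,l) * (if l = j then 1 else 0) + A $$ (i,l) * em n B l j)"
    by (rule sum.cong) (auto simp: em_def algebra_simps)
  also have "\<dots> = (\<Sum>l<n. (if l = j then A $$ (i,l) else 0)) + (\<Sum>l<n. A $$ (i,l) * em n B l j)"
    by (subst sum.distrib, rule arg_cong2[where f="(+)"], rule sum.cong, auto)
  also have "\<dots> = A $$ (i,j) + (\<Sum>l<n. A $$ (i,l) * em n B l j)"
    using j by simp
  finally show ?thesis .
qed

lemma Em_left:
  assumes "a \<noteq> b" "a < n" "b < n" "B \<in> carrier_mat n n" "k < n" "l < n"
  shows "(Em n a b c * B) $$ (k,l) = B $$ (k,l) + (if k = a then c * B $$ (b,l) else 0)"
proof -
  have "(\<Sum>m<n. em n (Em n a b c) k m * B $$ (m,l)) = (\<Sum>m<n. if m = b then (if k = a then c * B $$ (b,l) else 0) else 0)"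
    by (rule sum.cong) (use assms in \<open>auto simp: em_Em\<close>)
  also have "\<dots> = (if k = a then c * B $$ (b,l) else 0)" using assms by simp
  finally show ?thesis using mult_entry[OF Em_carrier assms(4-6)] by simp
qed

lemma Em_right:
  assumes "a \<noteq> b" "a < n" "b < n" "B \<in> carrier_mat n n" "k < n" "l < n"
  shows "(B * Em n a b c) $$ (k,l) = B $$ (k,l) + (if l = b then B $$ (k,a) * c else 0)"
proof -
  have "(\<Sum>m<n. B $$ (k,m) * em n (Em n a b c) m l) = (\<Sum>m<n. if m = a then (if l = b then B $$ (k,a) * c else 0) else 0)"
    by (rule sum.cong) (use assms in \<open>auto simp: em_Em\<close>)
  also have "\<dots> = (if l = b then B $$ (k,a) * c else 0)" using assms by simp
  finally show ?thesis using mult_entry_right[OF assms(4) Em_carrier assms(5-6)] by simp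
qed

definition Sidx :: "nat \<Rightarrow> (nat \<times> nat) set" where
  "Sidx n = {(i,j). i < n \<and> j < n \<and> (i,j) \<noteq> (n-1, n-1)}"

locale gsetup = zbasis V for V :: "'a::comm_ring_1 set" +
  fixes n p r :: nat and f :: "nat \<Rightarrow> nat \<times> nat"
  assumes n2: "n \<ge> 2" and pr: "prime p" and r1: "r \<ge> 1"
    and bij: "bij_betw f {..<n\<^sup>2 - 1} (Sidx n)"
begin

abbreviation "q \<equiv> p ^ r"
abbreviation "I \<equiv> {..<n\<^sup>2 - 1}"
abbreviation "F \<equiv> Fp_free p V"
abbreviation "T \<equiv> sum_group I (\<lambda>_. F)"
abbreviation "G \<equiv> (Gamma_SL n q :: 'a mat monoid)"

definition Phi :: "(nat \<Rightarrow> nat \<Rightarrow> 'a) \<Rightarrow> nat \<Rightarrow> 'a \<Rightarrow> int" where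
  "Phi X = (\<lambda>k\<in>I. \<lambda>v\<in>V. coef (X (fst (f k)) (snd (f k))) v mod int p)"

definition phi :: "'a mat \<Rightarrow> nat \<Rightarrow> 'a \<Rightarrow> int" where
  "phi A = (\<lambda>k\<in>I. \<lambda>v\<in>V. (coef (em n A (fst (f k)) (snd (f k))) v div int q) mod int p)"

lemma p_pos: "p > 0" using pr prime_gt_0_nat by blast
lemma q_pos: "q > 0" using p_pos by simp
lemma p_dvd_q: "p dvd q" using r1 by (simp add: dvd_power)

lemma f_S: "k \<in> I \<Longrightarrow> f k \<in> Sidx n" using bij bij_betwE by blast
lemma f_lt: "k \<in> I \<Longrightarrow> fst (f k) < n \<and> snd (f k) < n"
  using f_S[of k] by (auto simp: Sidx_def split: prod.splits)
lemma f_inj: "k \<in> I \<Longrightarrow> m \<in> I \<Longrightarrow> f k = f m \<Longrightarrow> k = m"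
  using bij by (auto simp: bij_betw_def inj_on_def)

lemma group_F: "group F" unfolding Fp_free_def by (rule sum_group) simp
lemma group_T: "group T" by (rule sum_group) (rule group_F)

lemma carrier_F: "carrier F = {x \<in> PiE V (\<lambda>_. {0..<int p}). finite {v \<in> V. x v \<noteq> 0}}"
  unfolding Fp_free_def using p_pos
  by (subst carrier_sum_group) (auto simp: carrier_integer_mod_group)

lemma carrier_T: "carrier T = {x \<in> PiE I (\<lambda>_. carrier F). finite {i \<in> I. x i \<noteq> \<one>\<^bsub>F\<^esub>}}"
  by (rule carrier_sum_group) (rule group_F)

lemma one_F: "\<one>\<^bsub>F\<^esub> = (\<lambda>v\<in>V. 0)" unfolding Fp_free_def by simp
lemma one_T: "\<one>\<^bsub>T\<^esub> = (\<lambda>k\<in>I. \<lambda>v\<in>V. 0)" by (simp add: one_F)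
lemma mult_F: "x \<otimes>\<^bsub>F\<^esub> y = (\<lambda>v\<in>V. (x v + y v) mod int p)" unfolding Fp_free_def by simp
lemma mult_T: "x \<otimes>\<^bsub>T\<^esub> y = (\<lambda>k\<in>I. x k \<otimes>\<^bsub>F\<^esub> y k)" by simp

lemma Phi_carrier: "Phi X \<in> carrier T"
proof -
  have "Phi X k \<in> carrier F" if "k \<in> I" for k
  proof -
    have "{v \<in> V. Phi X k v \<noteq> 0} \<subseteq> {v. coef (X (fst (f k)) (snd (f k))) v \<noteq> 0}"
      using that by (auto simp: Phi_def)
    hence "finite {v \<in> V. Phi X k v \<noteq> 0}" using coef_finite finite_subset by blast
    thus ?thesis using that p_pos by (auto simp: carrier_F Phi_def)
  qed
  thus ?thesis unfolding carrier_T by (auto simp: Phi_def)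
qed

lemma phi_Phi:
  assumes "\<And>i j. i < n \<Longrightarrow> j < n \<Longrightarrow> em n A i j = of_nat q * X i j"
  shows "phi A = Phi X"
proof -
  have "(coef (em n A (fst (f k)) (snd (f k))) v div int q) = coef (X (fst (f k)) (snd (f k))) v"
    if "k \<in> I" for k v
    using assms[of "fst (f k)" "snd (f k)"] f_lt[OF that] coef_nat_mult[of q] q_pos by (simp del: of_nat_power)
  thus ?thesis unfolding phi_def Phi_def by (intro restrict_ext) auto
qed

lemma get_X:
  assumes "A \<in> carrier (Gamma_SL n m)"
  shows "\<exists>X. \<forall>i<n. \<forall>j<n. em n A i j = of_nat m * X i j"
proof -
  define X where "X i j = (SOME y. em n A i j = of_nat m * y)" for i j
  have "em n A i j = of_nat m * X i j" if "i < n" "j < n" for i j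
    using assms that unfolding X_def carrier_Gamma dv_def by (auto intro: someI_ex)
  thus ?thesis by blast
qed

lemma carrier_G_mat: "A \<in> carrier G \<Longrightarrow> A \<in> carrier_mat n n"
  by (simp add: carrier_Gamma)

lemma prodX:
  assumes A: "A \<in> carrier_mat n n" and B: "B \<in> carrier_mat n n"
    and XA: "\<And>i j. i < n \<Longrightarrow> j < n \<Longrightarrow> em n A i j = of_nat q * XA i j"
    and XB: "\<And>i j. i < n \<Longrightarrow> j < n \<Longrightarrow> em n B i j = of_nat q * XB i j"
    and ij: "i < n" "j < n"
  shows "em n (A * B) i j = of_nat q * (XA i j + XB i j + of_nat q * (\<Sum>l<n. XA i l * XB l j))"
proof -
  have "(\<Sum>l<n. em n A i l * em n B l j) = (\<Sum>l<n. of_nat q * of_nat q * (XA i l * XB l j))"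
    by (rule sum.cong) (use XA XB ij in \<open>auto simp: algebra_simps\<close>)
  thus ?thesis unfolding em_mult[OF A B ij] using XA[OF ij] XB[OF ij]
    by (simp add: algebra_simps sum_distrib_left)
qed

lemma mod_q: "(a + int q * b) mod int p = a mod int p"
proof -
  obtain c where "q = p * c" using p_dvd_q by blast
  thus ?thesis by (simp add: mult.assoc)
qed

lemma phi_hom:
  assumes A: "A \<in> carrier G" and B: "B \<in> carrier G"
  shows "phi (A * B) = phi A \<otimes>\<^bsub>T\<^esub> phi B"
proof -
  obtain XA where XA: "\<forall>i<n. \<forall>j<n. em n A i j = of_nat q * XA i j" using get_X[OF A] by blast
  obtain XB where XB: "\<forall>i<n. \<forall>j<n. em n B i j = of_nat q * XB i j" using get_X[OF B] by blast
  have Am: "A \<in> carrier_mat n n" and Bm: "B \<in> carrier_mat n n" using A B carrier_G_mat by auto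
  define Z where "Z i j = (\<Sum>l<n. XA i l * XB l j)" for i j
  have "phi (A * B) = Phi (\<lambda>i j. XA i j + XB i j + of_nat q * Z i j)"
    by (rule phi_Phi) (use prodX[OF Am Bm] XA XB in \<open>auto simp: Z_def\<close>)
  moreover have "phi A = Phi XA" by (rule phi_Phi) (use XA in auto)
  moreover have "phi B = Phi XB" by (rule phi_Phi) (use XB in auto)
  moreover have "Phi (\<lambda>i j. XA i j + XB i j + of_nat q * Z i j) = Phi XA \<otimes>\<^bsub>T\<^esub> Phi XB"
  proof -
    have "(coef (XA a b + XB a b + of_nat q * Z a b) v) mod int p =
          (coef (XA a b) v mod int p + coef (XB a b) v mod int p) mod int p" for a b v
      unfolding coef_add coef_nat_mult by (simp add: mod_q mod_add_eq del: of_nat_power)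
    thus ?thesis unfolding mult_T mult_F Phi_def by (intro restrict_ext) auto
  qed
  ultimately show ?thesis by simp
qed

lemma group_hom: "group_hom G T phi"
proof -
  have "phi \<in> hom G T"
  proof (rule homI)
    fix A assume "A \<in> carrier G"
    then obtain X where "\<forall>i<n. \<forall>j<n. em n A i j = of_nat q * X i j" using get_X by blast
    hence "phi A = Phi X" by (intro phi_Phi) auto
    thus "phi A \<in> carrier T" using Phi_carrier by simp
  next
    fix A B assume "A \<in> carrier G" "B \<in> carrier G"
    thus "phi (A \<otimes>\<^bsub>G\<^esub> B) = phi A \<otimes>\<^bsub>T\<^esub> phi B" using phi_hom by simp
  qed
  thus ?thesis using group_Gamma group_T by (auto simp: group_hom_def group_hom_axioms_def)
qed

end

context gsetup begin

lemma Phi_one_iff: "Phi X = \<one>\<^bsub>T\<^esub> \<longleftrightarrow> (\<forall>k\<in>I. \<forall>v\<in>V. coef (X (fst (f k)) (snd (f k))) v mod int p = 0)"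
proof
  assume "Phi X = \<one>\<^bsub>T\<^esub>"
  hence "Phi X k v = 0" if "k \<in> I" "v \<in> V" for k v
    using that unfolding one_T by (metis restrict_apply')
  thus "\<forall>k\<in>I. \<forall>v\<in>V. coef (X (fst (f k)) (snd (f k))) v mod int p = 0"
    by (auto simp: Phi_def)
next
  assume "\<forall>k\<in>I. \<forall>v\<in>V. coef (X (fst (f k)) (snd (f k))) v mod int p = 0"
  thus "Phi X = \<one>\<^bsub>T\<^esub>" unfolding one_T Phi_def by (intro restrict_ext) auto
qed

lemma pow_Suc_eq: "(of_nat (p ^ (r + 1)) :: 'a) = of_nat q * of_nat p"
  by simp

lemma kernel_eq: "kernel G T phi = carrier (Gamma_SL n (p ^ (r + 1)))"
proof
  show "carrier (Gamma_SL n (p ^ (r + 1))) \<subseteq> kernel G T phi"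
  proof
    fix A :: "'a mat" assume A: "A \<in> carrier (Gamma_SL n (p ^ (r + 1)))"
    obtain Y where Y: "\<forall>i<n. \<forall>j<n. em n A i j = of_nat (p ^ (r + 1)) * Y i j"
      using get_X[OF A] by blast
    have Yq: "em n A i j = of_nat q * (of_nat p * Y i j)" if "i < n" "j < n" for i j
      using Y that by (simp only: pow_Suc_eq mult.assoc)
    have "A \<in> carrier G" using A Yq by (auto simp: carrier_Gamma dv_def)
    moreover have "phi A = \<one>\<^bsub>T\<^esub>"
    proof -
      have "phi A = Phi (\<lambda>i j. of_nat p * Y i j)" by (rule phi_Phi) (use Yq in auto)
      also have "\<dots> = \<one>\<^bsub>T\<^esub>" unfolding Phi_one_iff by (simp add: coef_nat_mult)
      finally show ?thesis .
    qed
    ultimately show "A \<in> kernel G T phi" by (simp add: kernel_def)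
  qed
next
  show "kernel G T phi \<subseteq> carrier (Gamma_SL n (p ^ (r + 1)))"
  proof
    fix A :: "'a mat" assume "A \<in> kernel G T phi"
    hence A: "A \<in> carrier G" and ph: "phi A = \<one>\<^bsub>T\<^esub>" by (auto simp: kernel_def)
    have Am: "A \<in> carrier_mat n n" and dA: "det A = 1" using A by (auto simp: carrier_Gamma)
    obtain X where X: "\<forall>i<n. \<forall>j<n. em n A i j = of_nat q * X i j" using get_X[OF A] by blast
    have "phi A = Phi X" by (rule phi_Phi) (use X in auto)
    hence "Phi X = \<one>\<^bsub>T\<^esub>" using ph by simp
    hence c0: "\<forall>k\<in>I. \<forall>v\<in>V. coef (X (fst (f k)) (snd (f k))) v mod int p = 0"
      using Phi_one_iff by blast
    have dvS: "dv p (X i j)" if "(i,j) \<in> Sidx n" for i j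
    proof -
      have "(i,j) \<in> f ` I" using bij that by (simp add: bij_betw_def)
      then obtain k where k: "k \<in> I" "f k = (i,j)" by (metis imageE)
      have "\<forall>v. int p dvd coef (X i j) v"
      proof
        fix v show "int p dvd coef (X i j) v"
        proof (cases "v \<in> V")
          case True
          hence "coef (X (fst (f k)) (snd (f k))) v mod int p = 0" using c0 k(1) by blast
          thus ?thesis using k(2) by (simp add: mod_eq_0_iff_dvd)
        qed (simp add: coef_outside)
      qed
      thus ?thesis unfolding dv_def using dvd_iff[OF p_pos] by blast
    qed
    define m where "m = n - 1"
    have nm: "n = Suc m" using n2 m_def by simp
    have dvD: "dv p (X m m)"
    proof -
      have "\<exists>z. det A = 1 + of_nat q * (\<Sum>i<n. X i i) + of_nat q * of_nat q * z"
        by (rule det_expand[OF Am]) (use X in auto)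
      then obtain z where z: "det A = 1 + of_nat q * (\<Sum>i<n. X i i) + of_nat q * of_nat q * z"
        by blast
      define Q where "Q = (of_nat q :: 'a)"
      define t where "t = (\<Sum>i<m. X i i)"
      have sn: "(\<Sum>i<n. X i i) = t + X m m" unfolding t_def nm by simp
      have "Q * ((\<Sum>i<n. X i i) + Q * z) = 0"
        using z dA unfolding Q_def[symmetric] by (simp add: distrib_left mult.assoc)
      hence tr: "(\<Sum>i<n. X i i) + of_nat q * z = 0" using torsion_free[OF q_pos] unfolding Q_def by blast
      have tr': "t + X m m + Q * z = 0" using tr unfolding sn Q_def[symmetric] .
      have "X m m = (t + X m m + Q * z) - t - Q * z" by (simp add: algebra_simps)
      hence "X m m = - t - Q * z" unfolding tr' by simp
      moreover have "dv p t" unfolding t_def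
        by (rule dv_sum) (rule dvS, auto simp: Sidx_def m_def)
      moreover have "dv p (Q * z)"
      proof -
        obtain c where "q = p * c" using p_dvd_q by blast
        hence "(Q * z :: 'a) = of_nat p * (of_nat c * z)" unfolding Q_def by (simp add: mult.assoc)
        thus ?thesis unfolding dv_def by blast
      qed
      ultimately show ?thesis by (metis dv_diff dv_neg)
    qed
    have "dv (p ^ (r + 1)) (em n A i j)" if "i < n" "j < n" for i j
    proof -
      have "dv p (X i j)"
      proof (cases "(i,j) = (m,m)")
        case True thus ?thesis using dvD by simp
      next
        case False
        hence "(i,j) \<in> Sidx n" using that unfolding Sidx_def m_def by simp
        thus ?thesis by (rule dvS)
      qed
      then obtain y where "X i j = of_nat p * y" unfolding dv_def by blast
      hence "em n A i j = of_nat (p ^ (r + 1)) * y" using X that by (simp only: pow_Suc_eq mult.assoc)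
      thus ?thesis unfolding dv_def by blast
    qed
    thus "A \<in> carrier (Gamma_SL n (p ^ (r + 1)))" using Am dA by (auto simp: carrier_Gamma)
  qed
qed

end

lemma Em_index: "k < n \<Longrightarrow> l < n \<Longrightarrow> Em n a b c $$ (k,l) = (if k = l then 1 else if k = a \<and> l = b then c else 0)"
  by (simp add: Em_def)

context gsetup begin

definition sng :: "nat \<Rightarrow> ('a \<Rightarrow> int) \<Rightarrow> nat \<Rightarrow> 'a \<Rightarrow> int" where
  "sng m w = (\<lambda>k\<in>I. if k = m then w else \<one>\<^bsub>F\<^esub>)"

definition xw :: "('a \<Rightarrow> int) \<Rightarrow> 'a" where
  "xw w = repc (\<lambda>v. if v \<in> V then w v else 0)"

lemma coef_xw:
  assumes "w \<in> carrier F"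
  shows "coef (xw w) = (\<lambda>v. if v \<in> V then w v else 0)"
  unfolding xw_def
proof (rule coef_eqI)
  have "{v. (if v \<in> V then w v else 0) \<noteq> 0} = {v \<in> V. w v \<noteq> 0}" by auto
  thus "goodc V (\<lambda>v. if v \<in> V then w v else 0)"
    using assms unfolding goodc_def carrier_F by auto
qed simp

lemma dv_q: "dv p (of_nat q * (y::'a))"
proof -
  obtain c where "q = p * c" using p_dvd_q by blast
  hence "(of_nat q * y :: 'a) = of_nat p * (of_nat c * y)" by (simp add: mult.assoc)
  thus ?thesis unfolding dv_def by blast
qed

lemma Phi_single:
  assumes m: "m \<in> I" and w: "w \<in> carrier F"
    and Xm: "X (fst (f m)) (snd (f m)) = xw w + of_nat p * y0"
    and Xk: "\<And>k. k \<in> I \<Longrightarrow> k \<noteq> m \<Longrightarrow> dv p (X (fst (f k)) (snd (f k)))"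
  shows "Phi X = sng m w"
  unfolding Phi_def sng_def
proof (rule restrict_ext)
  fix k assume k: "k \<in> I"
  show "(\<lambda>v\<in>V. coef (X (fst (f k)) (snd (f k))) v mod int p) = (if k = m then w else \<one>\<^bsub>F\<^esub>)"
  proof (cases "k = m")
    case True
    have wv: "w v \<in> {0..<int p}" if "v \<in> V" for v
      using w that unfolding carrier_F by (auto simp: PiE_iff)
    have "(\<lambda>v\<in>V. coef (X (fst (f k)) (snd (f k))) v mod int p) = w"
    proof
      fix v show "(\<lambda>v\<in>V. coef (X (fst (f k)) (snd (f k))) v mod int p) v = w v"
      proof (cases "v \<in> V")
        case True
        hence "coef (X (fst (f k)) (snd (f k))) v = w v + int p * coef y0 v"
          using Xm \<open>k = m\<close> coef_xw[OF w] by (simp add: coef_add coef_nat_mult)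
        thus ?thesis using True wv[OF True] by simp
      next
        case False
        thus ?thesis using w unfolding carrier_F by (auto simp: PiE_iff extensional_def)
      qed
    qed
    thus ?thesis using True by simp
  next
    case False
    obtain y where "X (fst (f k)) (snd (f k)) = of_nat p * y" using Xk[OF k False] unfolding dv_def by blast
    thus ?thesis using False by (simp add: one_F coef_nat_mult)
  qed
qed

lemma sng_off:
  assumes m: "m \<in> I" and fm: "f m = (a,b)" and ab: "a \<noteq> b" and w: "w \<in> carrier F"
  shows "\<exists>A\<in>carrier G. phi A = sng m w"
proof -
  have an: "a < n" "b < n" using f_lt[OF m] fm by auto
  define x where "x = xw w"
  define X where "X k l = (if k = a \<and> l = b then x else 0)" for k l
  define A where "A = (Em n a b (of_nat q * x) :: 'a mat)"
  have eA: "em n A k l = of_nat q * X k l" if "k < n" "l < n" for k l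
    unfolding A_def X_def em_Em[OF ab that] by simp
  have "A \<in> carrier G" unfolding carrier_Gamma
    using det_Em[OF ab] eA by (auto simp: A_def dv_of_nat simp del: of_nat_power)
  moreover have "phi A = sng m w"
  proof -
    have "phi A = Phi X" by (rule phi_Phi) (use eA in auto)
    also have "\<dots> = sng m w"
    proof (rule Phi_single[OF m w, of _ 0])
      show "X (fst (f m)) (snd (f m)) = xw w + of_nat p * 0" by (simp add: fm X_def x_def)
      fix k assume "k \<in> I" "k \<noteq> m"
      hence "f k \<noteq> (a,b)" using f_inj m fm by metis
      hence "X (fst (f k)) (snd (f k)) = 0" unfolding X_def by (auto split: prod.splits)
      thus "dv p (X (fst (f k)) (snd (f k)))" by (simp add: dv_zero)
    qed
    finally show ?thesis .
  qed
  ultimately show ?thesis by blast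
qed

lemma sng_diag:
  assumes m: "m \<in> I" and fm: "f m = (a,a)" and w: "w \<in> carrier F"
  shows "\<exists>A\<in>carrier G. phi A = sng m w"
proof -
  define t where "t = n - 1"
  have an: "a < n" "t < n" and at: "a \<noteq> t"
    using f_S[OF m] fm n2 by (auto simp: Sidx_def t_def)
  define x where "x = xw w"
  define c where "c = - (of_nat q * x :: 'a)"
  define P where "P = (Em n t a 1 :: 'a mat)"
  define B where "B = (Em n a t c :: 'a mat)"
  define N where "N = (Em n t a (-1) :: 'a mat)"
  define A0 where "A0 = P * B * N"
  define XA where "XA k l = (if k = a \<and> l = a then x else if k = a \<and> l = t then - x
     else if k = t \<and> l = a then x else if k = t \<and> l = t then - x else 0)" for k l
  have PB: "(P * B) $$ (k,l) = B $$ (k,l) + (if k = t then 1 * B $$ (a,l) else 0)" if "k < n" "l < n" for k l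
    unfolding P_def by (rule Em_left) (use at an that in \<open>auto simp: B_def\<close>)
  have A0e: "A0 $$ (k,l) = (P * B) $$ (k,l) + (if l = a then (P * B) $$ (k,t) * (-1) else 0)" if "k < n" "l < n" for k l
    unfolding A0_def N_def by (rule Em_right) (use at an that in \<open>auto simp: B_def P_def intro!: mult_carrier_mat[of _ n n]\<close>)
  have eA0: "em n A0 k l = of_nat q * XA k l" if kl: "k < n" "l < n" for k l
  proof -
    have "A0 $$ (k,l) = B $$ (k,l) + (if k = t then B $$ (a,l) else 0) +
       (if l = a then (B $$ (k,t) + (if k = t then B $$ (a,t) else 0)) * (-1) else 0)"
      using A0e[OF kl] PB[OF kl] PB[OF kl(1) an(2)] by simp
    hence "em n A0 k l = B $$ (k,l) + (if k = t then B $$ (a,l) else 0) +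
       (if l = a then (B $$ (k,t) + (if k = t then B $$ (a,t) else 0)) * (-1) else 0) - (if k = l then 1 else 0)"
      by (simp add: em_def)
    also have "\<dots> = of_nat q * XA k l"
      unfolding B_def using kl an at by (auto simp: Em_index XA_def c_def)
    finally show ?thesis .
  qed
  have Pm: "P \<in> carrier_mat n n" and Bm: "B \<in> carrier_mat n n" and Nm: "N \<in> carrier_mat n n"
    unfolding P_def B_def N_def by simp_all
  have PBm: "P * B \<in> carrier_mat n n" using Pm Bm by (rule mult_carrier_mat)
  have A0m: "A0 \<in> carrier_mat n n" unfolding A0_def using PBm Nm by (rule mult_carrier_mat)
  have "det A0 = det P * det B * det N" unfolding A0_def
    using det_mult[OF PBm Nm] det_mult[OF Pm Bm] by simp
  also have "\<dots> = 1" unfolding P_def B_def N_def using at by (simp add: det_Em)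
  finally have "det A0 = 1" .
  hence A0G: "A0 \<in> carrier G" using A0m eA0 by (auto simp: carrier_Gamma dv_of_nat simp del: of_nat_power)
  define X1 where "X1 k l = (if k = a \<and> l = t then x else 0)" for k l
  define A1 where "A1 = (Em n a t (of_nat q * x) :: 'a mat)"
  have eA1: "em n A1 k l = of_nat q * X1 k l" if "k < n" "l < n" for k l
    unfolding A1_def X1_def em_Em[OF at that] by simp
  have A1G: "A1 \<in> carrier G" unfolding carrier_Gamma
    using det_Em[OF at] eA1 by (auto simp: A1_def dv_of_nat simp del: of_nat_power)
  define X2 where "X2 k l = (if k = t \<and> l = a then - x else 0)" for k l
  define A2 where "A2 = (Em n t a (- (of_nat q * x)) :: 'a mat)"
  have ta: "t \<noteq> a" using at by simp
  have eA2: "em n A2 k l = of_nat q * X2 k l" if "k < n" "l < n" for k l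
    unfolding A2_def X2_def em_Em[OF ta that] by simp
  have A2G: "A2 \<in> carrier G" unfolding carrier_Gamma
    using det_Em[OF ta] eA2 by (auto simp: A2_def dv_of_nat simp del: of_nat_power)
  have gG: "group G" by (rule group_Gamma)
  have A01G: "A0 * A1 \<in> carrier G" using group.subgroup_self[OF gG] A0G A1G
    by (metis mult_Gamma group.is_monoid monoid.m_closed gG)
  have MG: "A0 * A1 * A2 \<in> carrier G" using A01G A2G
    by (metis mult_Gamma group.is_monoid monoid.m_closed gG)
  define Z1 where "Z1 i j = (\<Sum>l<n. XA i l * X1 l j)" for i j
  define X01 where "X01 i j = XA i j + X1 i j + of_nat q * Z1 i j" for i j
  have e01: "em n (A0 * A1) i j = of_nat q * X01 i j" if "i < n" "j < n" for i j
    unfolding X01_def Z1_def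
    by (rule prodX[OF A0m _ eA0 eA1 that]) (simp add: A1_def)
  define Z2 where "Z2 i j = (\<Sum>l<n. X01 i l * X2 l j)" for i j
  define XM where "XM i j = X01 i j + X2 i j + of_nat q * Z2 i j" for i j
  have eM: "em n (A0 * A1 * A2) i j = of_nat q * XM i j" if "i < n" "j < n" for i j
    unfolding XM_def Z2_def
    by (rule prodX[OF _ _ e01 eA2 that]) (use A01G in \<open>auto simp: A2_def carrier_Gamma\<close>)
  have XMeq: "XM i j = XA i j + X1 i j + X2 i j + of_nat q * (Z1 i j + Z2 i j)" for i j
    unfolding XM_def X01_def by (simp add: algebra_simps)
  have phM: "phi (A0 * A1 * A2) = Phi XM" by (rule phi_Phi) (use eM in auto)
  obtain cc where cc: "q = p * cc" using p_dvd_q by blast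
  have "XM a a = x + of_nat q * (Z1 a a + Z2 a a)"
    unfolding XMeq using at by (simp add: XA_def X1_def X2_def)
  also have "\<dots> = x + of_nat p * (of_nat cc * (Z1 a a + Z2 a a))"
    unfolding cc by (simp add: mult.assoc)
  finally have XMa: "XM (fst (f m)) (snd (f m)) = xw w + of_nat p * (of_nat cc * (Z1 a a + Z2 a a))"
    using fm x_def by simp
  have "Phi XM = sng m w"
  proof (rule Phi_single[where X=XM, OF m w XMa])
    fix k assume k: "k \<in> I" "k \<noteq> m"
    obtain i j where fk: "f k = (i,j)" by fastforce
    have "(i,j) \<noteq> (a,a)" using f_inj k m fk fm by metis
    moreover have "(i,j) \<noteq> (t,t)" using f_S[OF k(1)] fk by (auto simp: Sidx_def t_def)
    ultimately have "XA i j + X1 i j + X2 i j = 0"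
      using at by (auto simp: XA_def X1_def X2_def)
    hence "XM i j = of_nat q * (Z1 i j + Z2 i j)" unfolding XMeq by simp
    thus "dv p (XM (fst (f k)) (snd (f k)))" using fk dv_q by simp
  qed
  thus ?thesis using MG phM by auto
qed

end

context gsetup begin

lemma sng_img: "m \<in> I \<Longrightarrow> w \<in> carrier F \<Longrightarrow> sng m w \<in> phi ` carrier G"
proof -
  assume m: "m \<in> I" and w: "w \<in> carrier F"
  obtain a b where fm: "f m = (a,b)" by fastforce
  have "\<exists>A\<in>carrier G. phi A = sng m w"
  proof (cases "a = b")
    case True thus ?thesis using sng_diag[OF m _ w] fm by simp
  next
    case False thus ?thesis using sng_off[OF m fm False w] by simp
  qed
  thus ?thesis by force
qed

lemma surj: "phi ` carrier G = carrier T"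
proof
  show "phi ` carrier G \<subseteq> carrier T" using group_hom.hom_closed[OF group_hom] by blast
next
  show "carrier T \<subseteq> phi ` carrier G"
  proof
    fix g assume g: "g \<in> carrier T"
    have sub: "subgroup (phi ` carrier G) T" by (rule group_hom.img_is_subgroup[OF group_hom])
    have gk: "g k \<in> carrier F" if "k \<in> I" for k using g that unfolding carrier_T by (auto simp: PiE_iff)
    have gF: "group F" by (rule group_F)
    define gm where "gm m = (\<lambda>k\<in>I. if k < m then g k else \<one>\<^bsub>F\<^esub>)" for m
    have "gm m \<in> phi ` carrier G" for m
    proof (induction m)
      case 0
      have "gm 0 = \<one>\<^bsub>T\<^esub>" unfolding gm_def by simp
      moreover have "\<one>\<^bsub>T\<^esub> \<in> phi ` carrier G" by (rule subgroup.one_closed[OF sub])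
      ultimately show ?case by (simp only:)
    next
      case (Suc m)
      show ?case
      proof (cases "m \<in> I")
        case True
        have "gm (Suc m) = gm m \<otimes>\<^bsub>T\<^esub> sng m (g m)"
          unfolding mult_T gm_def sng_def
        proof (rule restrict_ext)
          fix k assume k: "k \<in> I"
          show "(if k < Suc m then g k else \<one>\<^bsub>F\<^esub>) =
            (\<lambda>k\<in>I. if k < m then g k else \<one>\<^bsub>F\<^esub>) k \<otimes>\<^bsub>F\<^esub> (\<lambda>k\<in>I. if k = m then g m else \<one>\<^bsub>F\<^esub>) k"
          proof -
            consider "k < m" | "k = m" | "k > m" by linarith
            thus ?thesis
            proof cases
              case 1 thus ?thesis using k monoid.r_one[OF group.is_monoid[OF gF] gk[OF k]] by simp
            next
              case 2 thus ?thesis using k monoid.l_one[OF group.is_monoid[OF gF] gk[OF k]] by simp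
            next
              case 3 thus ?thesis using k monoid.l_one[OF group.is_monoid[OF gF] monoid.one_closed[OF group.is_monoid[OF gF]]] by simp
            qed
          qed
        qed
        moreover have "sng m (g m) \<in> phi ` carrier G" by (rule sng_img[OF True gk[OF True]])
        ultimately show ?thesis using subgroup.m_closed[OF sub Suc.IH] by metis
      next
        case False
        have "gm (Suc m) = gm m" unfolding gm_def
          by (rule restrict_ext) (use False in auto)
        thus ?thesis using Suc.IH by simp
      qed
    qed
    moreover have "gm (n\<^sup>2 - 1) = g"
    proof
      fix k show "gm (n\<^sup>2 - 1) k = g k"
        using g unfolding gm_def carrier_T by (auto simp: PiE_iff extensional_def)
    qed
    ultimately show "g \<in> phi ` carrier G" by metis
  qed
qed

lemma iso: "(G Mod carrier (Gamma_SL n (p ^ (r + 1)))) \<cong> T"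
  using group_hom.FactGroup_iso[OF group_hom surj] kernel_eq by simp

end

lemma card_Sidx: "n \<ge> 1 \<Longrightarrow> card (Sidx n) = n\<^sup>2 - 1"
proof -
  assume n: "n \<ge> 1"
  have "Sidx n = ({..<n} \<times> {..<n}) - {(n-1, n-1)}" unfolding Sidx_def by auto
  moreover have "(n-1, n-1) \<in> {..<n} \<times> {..<n}" using n by auto
  ultimately show ?thesis by (simp add: card_Diff_singleton power2_eq_square)
qed

theorem lemma3p7:
  fixes V :: "'a::comm_ring_1 set" and n p r :: nat
  assumes "is_Z_basis V" and "n \<ge> 2" and "prime p" and "r \<ge> 1"
  shows "((Gamma_SL n (p ^ r) :: 'a mat monoid) Mod carrier (Gamma_SL n (p ^ (r + 1))))
           \<cong> sum_group {..<n\<^sup>2 - 1} (\<lambda>_. Fp_free p V)"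
proof -
  have fin: "finite (Sidx n)" unfolding Sidx_def
    by (rule finite_subset[of _ "{..<n} \<times> {..<n}"]) auto
  obtain h where h: "bij_betw h {0..<card (Sidx n)} (Sidx n)"
    using ex_bij_betw_nat_finite[OF fin] by blast
  have "{0..<card (Sidx n)} = {..<n\<^sup>2 - 1}" using card_Sidx[of n] assms(2) by auto
  hence h': "bij_betw h {..<n\<^sup>2 - 1} (Sidx n)" using h by simp
  interpret gsetup V n p r h
    by unfold_locales (use assms h' in auto)
  show ?thesis by (rule iso)
qed

end
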